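(* Let $(X,T)$ be a topological dynamical system and let $(K(X),T_K)$ be the induced system on the hyperspace. The following are equivalent: (1) $(K(X),T_K)$ is proximal; (2) $\bigcap_{n=0}^\infty T^nX$ is a singleton; (3) $X$ is a uniformly proximal set, i.e. for every $\varepsilon>0$ there is $n\in\mathbb{N}$ with $\operatorname{diam}(T^nX)<\varepsilon$.
   Context: A topological dynamical system $(X,T)$ consists of a non-empty compact metric space $(X,d)$ and a continuous map $T:X\to X$ (not necessarily surjective). $K(X)$ is the space of non-empty closed subsets of $X$ with the Hausdorff metric $d_H(A,B)=\max\{\max_{x\in A}\min_{y\in B}d(x,y),\max_{y\in B}\min_{x\in A}d(x,y)\}$, and $T_K(C)=T(C)$. A system is proximal if every pair $(u,v)$ satisfies $\liminf_{n\to\infty}\rho(T^nu,T^nv)=0$ for the relevant metric $\rho$. *)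

theory Defs
  imports "HOL-Analysis.Analysis"
begin

text \<open>For compact nonempty sets the suprema
  below are maxima and infdist is a minimum.\<close>
definition hausdorff_dist :: "'a::metric_space set \<Rightarrow> 'a set \<Rightarrow> real" where
  "hausdorff_dist A B = max (SUP x\<in>A. infdist x B) (SUP y\<in>B. infdist y A)"

definition hyperspace :: "'a::metric_space set \<Rightarrow> 'a set set" where
  "hyperspace X = {C. C \<noteq> {} \<and> C \<subseteq> X \<and> closed C}"

definition proximal_sys :: "'b set \<Rightarrow> ('b \<Rightarrow> 'b) \<Rightarrow> ('b \<Rightarrow> 'b \<Rightarrow> real) \<Rightarrow> bool" where
  "proximal_sys S f \<rho> \<longleftrightarrow>
     (\<forall>u\<in>S. \<forall>v\<in>S. liminf (\<lambda>n. ereal (\<rho> ((f ^^ n) u) ((f ^^ n) v))) = 0)"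

definition uniformly_proximal_set :: "('a::metric_space \<Rightarrow> 'a) \<Rightarrow> 'a set \<Rightarrow> bool" where
  "uniformly_proximal_set T A \<longleftrightarrow> (\<forall>\<epsilon>>0. \<exists>n::nat. diameter ((T ^^ n) ` A) < \<epsilon>)"

end

theory Submission
  imports Defs
begin

lemma iter_img: "((\<lambda>C. T ` C) ^^ n) C = (T ^^ n) ` (C::'a set)" for T :: "'a \<Rightarrow> 'a"
  by (induction n) (simp_all add: image_comp)

lemma nest: fixes F :: "nat \<Rightarrow> 'a::metric_space set" assumes "\<And>n. compact (F n)" "\<And>n. F n \<noteq> {}" "\<And>m n. m \<le> n \<Longrightarrow> F n \<subseteq> F m"
 shows "\<Inter>(range F) \<noteq> {}"
proof -
  have "F 0 \<inter> \<Inter>(range F) \<noteq> {}"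
  proof (rule compact_imp_fip[OF assms(1)])
    show "\<And>T. T \<in> range F \<Longrightarrow> closed T" using assms(1) compact_imp_closed by blast
    fix G assume "finite G" "G \<subseteq> range F"
    then obtain I where I: "finite I" "G = F ` I" by (meson finite_subset_image)
    define m where "m = Max (insert 0 I)"
    have "i \<le> m" if "i \<in> I" for i using I that unfolding m_def by simp
    then have "F m \<subseteq> F 0 \<inter> \<Inter>G" using I assms(3) by blast
    then show "F 0 \<inter> \<Inter>G \<noteq> {}" using assms(2)[of m] by blast
  qed
  then show ?thesis by blast
qed

lemma diam_le_metric:
  fixes S :: "'a::metric_space set"
  assumes "S \<noteq> {}" "\<And>x y. x \<in> S \<Longrightarrow> y \<in> S \<Longrightarrow> dist x y \<le> d"
  shows "diameter S \<le> d"
  unfolding diameter_def using assms by (auto intro!: cSUP_least)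

lemma hd_le:
  fixes S :: "'a::metric_space set"
  assumes "bounded S" "A \<subseteq> S" "B \<subseteq> S" "A \<noteq> {}" "B \<noteq> {}"
  shows "hausdorff_dist A B \<le> diameter S" "0 \<le> hausdorff_dist A B"
proof -
  have b1: "infdist x B \<le> diameter S" if "x \<in> A" for x
  proof -
    obtain b where "b \<in> B" using assms by auto
    then have "infdist x B \<le> dist x b" by (rule infdist_le)
    also have "\<dots> \<le> diameter S" using assms that \<open>b \<in> B\<close> by (intro diameter_bounded_bound) auto
    finally show ?thesis .
  qed
  have b2: "infdist y A \<le> diameter S" if "y \<in> B" for y
  proof -
    obtain a where "a \<in> A" using assms by auto
    then have "infdist y A \<le> dist y a" by (rule infdist_le)
    also have "\<dots> \<le> diameter S" using assms that \<open>a \<in> A\<close> by (intro diameter_bounded_bound) auto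
    finally show ?thesis .
  qed
  show "hausdorff_dist A B \<le> diameter S"
    unfolding hausdorff_dist_def using b1 b2 assms
    by (auto intro!: cSUP_least)
  obtain a where a: "a \<in> A" using assms by auto
  have "0 \<le> infdist a B" by (rule infdist_nonneg)
  also have "\<dots> \<le> (SUP x\<in>A. infdist x B)"
    using a b1 by (intro cSUP_upper) (auto intro!: bdd_aboveI[of _ "diameter S"])
  finally show "0 \<le> hausdorff_dist A B" unfolding hausdorff_dist_def by simp
qed

theorem mainTheorem11:
  fixes X :: "'a::metric_space set" and T :: "'a \<Rightarrow> 'a"
  assumes "compact X" and "X \<noteq> {}"
    and "continuous_on X T" and "T ` X \<subseteq> X"
  shows "(proximal_sys (hyperspace X) (\<lambda>C. T ` C) hausdorff_dist
            \<longleftrightarrow> (\<exists>x. (\<Inter>n. (T ^^ n) ` X) = {x}))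
       \<and> ((\<exists>x. (\<Inter>n. (T ^^ n) ` X) = {x}) \<longleftrightarrow> uniformly_proximal_set T X)"
proof -
  define F where "F n = (T ^^ n) ` X" for n
  have sub: "(T ^^ n) ` X \<subseteq> X" for n
    by (induction n) (use assms(4) in auto)
  have cont: "continuous_on X (T ^^ n)" for n
  proof (induction n)
    case 0 then show ?case by (simp add: continuous_on_id)
  next
    case (Suc n)
    have "continuous_on X (T \<circ> (T ^^ n))"
      by (rule continuous_on_compose[OF Suc]) (rule continuous_on_subset[OF assms(3) sub])
    then show ?case by simp
  qed
  have Fc: "compact (F n)" for n
    unfolding F_def by (rule compact_continuous_image[OF cont assms(1)])
  have Fne: "F n \<noteq> {}" for n using assms(2) by (simp add: F_def)
  have Fsub1: "F (Suc n) \<subseteq> F n" for n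
  proof -
    have "F (Suc n) = (T ^^ n) ` (T ` X)" unfolding F_def
      by (simp add: funpow_Suc_right image_comp del: funpow.simps)
    then show ?thesis unfolding F_def using assms(4) by auto
  qed
  have Fmono: "m \<le> n \<Longrightarrow> F n \<subseteq> F m" for m n
    by (induction n rule: dec_induct) (use Fsub1 in auto)
  have FX: "F n \<subseteq> X" for n using sub by (simp add: F_def)
  have Fb: "bounded (F n)" for n using Fc compact_imp_bounded by blast
  define Y where "Y = (\<Inter>n. F n)"
  have Yne: "Y \<noteq> {}" unfolding Y_def by (rule nest) (use Fc Fne Fmono in auto)
  have Yeq: "(\<Inter>n. (T ^^ n) ` X) = Y" by (simp add: Y_def F_def)
  have up_eq: "uniformly_proximal_set T X \<longleftrightarrow> (\<forall>e>0. \<exists>n. diameter (F n) < e)"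
    by (simp add: uniformly_proximal_set_def F_def)
  have 23: "\<exists>n. diameter (F n) < e" if "Y = {x}" "e > 0" for x e
  proof -
    define K where "K n = F n - ball x (e/3)" for n
    have "\<Inter>(range K) = {}" using that(1) \<open>e>0\<close> unfolding K_def Y_def by auto
    moreover have "compact (K n)" for n unfolding K_def using Fc
      by (simp add: compact_diff)
    moreover have "m \<le> n \<Longrightarrow> K n \<subseteq> K m" for m n unfolding K_def using Fmono by auto
    ultimately obtain n where "K n = {}" using nest[of K] by blast
    then have "F n \<subseteq> ball x (e/3)" unfolding K_def by auto
    then have "diameter (F n) \<le> 2*e/3"
    proof (intro diam_le_metric[OF Fne])
      fix a b assume "F n \<subseteq> ball x (e/3)" "a \<in> F n" "b \<in> F n"
      then have "dist x a < e/3" "dist x b < e/3" by auto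
      then show "dist a b \<le> 2*e/3" using dist_triangle2[of a b x] by (simp add: dist_commute)
    qed
    then show ?thesis using \<open>e > 0\<close> by (intro exI[of _ n]) simp
  qed
  have 32: "\<exists>x. Y = {x}" if h: "\<forall>e>0. \<exists>n. diameter (F n) < e"
  proof -
    have "y = z" if "y \<in> Y" "z \<in> Y" for y z
    proof (rule ccontr)
      assume "y \<noteq> z"
      then obtain n where "diameter (F n) < dist y z" using h zero_less_dist_iff by blast
      moreover have "dist y z \<le> diameter (F n)"
        using that Fb by (intro diameter_bounded_bound) (auto simp: Y_def)
      ultimately show False by simp
    qed
    then show ?thesis using Yne by blast
  qed
  have 21: "proximal_sys (hyperspace X) (\<lambda>C. T ` C) hausdorff_dist" if Yx: "Y = {x}" for x
    unfolding proximal_sys_def iter_img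
  proof (intro ballI)
    fix u v assume u: "u \<in> hyperspace X" and v: "v \<in> hyperspace X"
    have uv: "(T ^^ n) ` u \<subseteq> F n" "(T ^^ n) ` v \<subseteq> F n" "(T ^^ n) ` u \<noteq> {}" "(T ^^ n) ` v \<noteq> {}" for n
      using u v by (auto simp: hyperspace_def F_def)
    let ?f = "\<lambda>n. hausdorff_dist ((T ^^ n) ` u) ((T ^^ n) ` v)"
    have "?f \<longlonglongrightarrow> 0"
    proof (rule tendstoI)
      fix e :: real assume "e > 0"
      then obtain N where N: "diameter (F N) < e" using 23[OF Yx \<open>e > 0\<close>] by blast
      show "eventually (\<lambda>n. dist (?f n) 0 < e) sequentially"
      proof (rule eventually_sequentiallyI[of N])
        fix n assume "N \<le> n"
        have "?f n \<le> diameter (F n)" "0 \<le> ?f n" using hd_le[OF Fb uv[of n]] by auto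
        moreover have "diameter (F n) \<le> diameter (F N)"
          using Fmono[OF \<open>N \<le> n\<close>] Fb by (rule diameter_subset)
        ultimately show "dist (?f n) 0 < e" using N by simp
      qed
    qed
    then have L: "(\<lambda>n. ereal (?f n)) \<longlonglongrightarrow> ereal 0" by (intro tendsto_intros)
    have "liminf (\<lambda>n. ereal (?f n)) = ereal 0"
      by (rule lim_imp_Liminf[OF _ L]) simp
    then show "liminf (\<lambda>n. ereal (?f n)) = 0" by (simp add: zero_ereal_def)
  qed
  have 12: "\<exists>x. Y = {x}" if P: "proximal_sys (hyperspace X) (\<lambda>C. T ` C) hausdorff_dist"
  proof (rule ccontr)
    assume ns: "\<nexists>x. Y = {x}"
    obtain y z where yz: "y \<in> Y" "z \<in> Y" "y \<noteq> z" using Yne ns by blast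
    obtain p where p: "p \<in> X" using assms(2) by auto
    have hX: "X \<in> hyperspace X" using assms(1,2) compact_imp_closed by (auto simp: hyperspace_def)
    have hp: "{p} \<in> hyperspace X" using p by (auto simp: hyperspace_def)
    let ?d = "dist y z / 2"
    have bnd: "ereal ?d \<le> ereal (hausdorff_dist ((T ^^ n) ` X) ((T ^^ n) ` {p}))" for n
    proof -
      let ?q = "(T ^^ n) p"
      have bdd: "bdd_above ((\<lambda>a. infdist a {?q}) ` F n)"
      proof -
        have "bounded ((\<lambda>a. dist a ?q) ` F n)"
          by (intro compact_imp_bounded compact_continuous_image[OF _ Fc]) (intro continuous_intros)
        then show ?thesis by (simp add: bounded_imp_bdd_above)
      qed
      have yF: "y \<in> F n" "z \<in> F n" using yz by (auto simp: Y_def)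
      have "?d \<le> max (dist y ?q) (dist z ?q)"
        using dist_triangle2[of y z ?q] by simp
      also have "\<dots> \<le> (SUP a\<in>F n. infdist a {?q})"
      proof (rule max.boundedI)
        show "dist y ?q \<le> (SUP a\<in>F n. infdist a {?q})"
          using cSUP_upper[OF yF(1) bdd] by (simp add: infdist_singleton)
        show "dist z ?q \<le> (SUP a\<in>F n. infdist a {?q})"
          using cSUP_upper[OF yF(2) bdd] by (simp add: infdist_singleton)
      qed
      also have "\<dots> \<le> hausdorff_dist ((T ^^ n) ` X) ((T ^^ n) ` {p})"
        unfolding hausdorff_dist_def F_def by simp
      finally show ?thesis by simp
    qed
    have "ereal ?d \<le> liminf (\<lambda>n. ereal (hausdorff_dist ((T ^^ n) ` X) ((T ^^ n) ` {p})))"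
      by (intro Liminf_bounded always_eventually allI bnd)
    moreover have "liminf (\<lambda>n. ereal (hausdorff_dist ((T ^^ n) ` X) ((T ^^ n) ` {p}))) = 0"
      using P hX hp unfolding proximal_sys_def iter_img by blast
    ultimately show False using yz(3) by simp
  qed
  show ?thesis unfolding Yeq up_eq using 12 21 23 32 by blast
qed

end
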